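(* Let $n\ge2$, $t_1<\dots<t_n$, and for $j=1,\dots,n-1$ let $\lambda_{0,j}\le\lambda_{1,j}$ be real. For $f\in C^2[t_1,t_n]$ let $I_2(f)$ be the continuous function on $[t_1,t_n]$ whose restriction to each $[t_j,t_{j+1}]$ lies in $E(\lambda_{0,j},\lambda_{1,j})$ and which satisfies $I_2(f)(t_j)=f(t_j)$ for $j=1,\dots,n$. Then $$\|f-I_2(f)\|_{[t_1,t_n]}\le\max_{1\le j\le n-1}M^{t_j,t_{j+1}}_{\lambda_{0,j},\lambda_{1,j}}\cdot\max_{1\le j\le n-1}\max_{\theta\in[t_j,t_{j+1}]}\left|L_{(\lambda_{0,j},\lambda_{1,j})}f(\theta)\right|.$$
   Context: $\|g\|_{[a,b]}=\max_{t\in[a,b]}|g(t)|$. For real $\lambda_0,\dots,\lambda_N$, $L_{(\lambda_0,\dots,\lambda_N)}=\prod_{j=0}^N(\frac{d}{dt}-\lambda_j)$ and $E(\lambda_0,\dots,\lambda_N)=\{f\in C^{N+1}(\mathbb{R}):L_{(\lambda_0,\dots,\lambda_N)}f=0\}$. For real $\mu_0,\mu_1$ and $a<b$, $\Omega^{a,b}_{\mu_0,\mu_1,0}$ denotes the unique $u\in E(\mu_0,\mu_1,0)$ with $u(a)=u(b)=0$ and $L_{(\mu_0,\mu_1)}u\equiv-1$, and $M^{a,b}_{\mu_0,\mu_1}:=\max_{t\in[a,b]}|\Omega^{a,b}_{\mu_0,\mu_1,0}(t)|$. *)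

theory Defs
  imports "HOL-Analysis.Analysis"
begin

definition supnorm_on :: "real \<Rightarrow> real \<Rightarrow> (real \<Rightarrow> real) \<Rightarrow> real" where
  "supnorm_on a b g = Sup ((\<lambda>t. \<bar>g t\<bar>) ` {a..b})"

definition Dop :: "real \<Rightarrow> (real \<Rightarrow> real) \<Rightarrow> (real \<Rightarrow> real)" where
  "Dop lam g = (\<lambda>t. deriv g t - lam * g t)"

definition Lop :: "real list \<Rightarrow> (real \<Rightarrow> real) \<Rightarrow> (real \<Rightarrow> real)" where
  "Lop lams f = foldr Dop lams f"

definition Ck :: "nat \<Rightarrow> (real \<Rightarrow> real) \<Rightarrow> bool" where
  "Ck k f \<longleftrightarrow> (\<forall>j<k. \<forall>x. (deriv ^^ j) f differentiable (at x)) \<and> continuous_on UNIV ((deriv ^^ k) f)"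

definition Espace :: "real list \<Rightarrow> (real \<Rightarrow> real) set" where
  "Espace lams = {f. Ck (length lams) f \<and> (\<forall>t. Lop lams f t = 0)}"

definition Omega :: "real \<Rightarrow> real \<Rightarrow> real \<Rightarrow> real \<Rightarrow> (real \<Rightarrow> real)" where
  "Omega a b mu0 mu1 = (THE u. u \<in> Espace [mu0, mu1, 0] \<and> u a = 0 \<and> u b = 0 \<and>
                                 (\<forall>t. Lop [mu0, mu1] u t = -1))"

definition Mconst :: "real \<Rightarrow> real \<Rightarrow> real \<Rightarrow> real \<Rightarrow> real" where
  "Mconst a b mu0 mu1 = supnorm_on a b (Omega a b mu0 mu1)"

text \<open>\<open>L_(\<lambda>_0,\<lambda>_1) f = f'' - (\<lambda>_0+\<lambda>_1) f' + \<lambda>_0\<lambda>_1 f\<close> for a function given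
  on an interval together with its first and second derivatives \<open>f'\<close>, \<open>f''\<close>.\<close>
definition L2 :: "real \<Rightarrow> real \<Rightarrow> (real \<Rightarrow> real) \<Rightarrow> (real \<Rightarrow> real) \<Rightarrow> (real \<Rightarrow> real) \<Rightarrow> real \<Rightarrow> real" where
  "L2 lam0 lam1 f f' f'' t = f'' t - (lam0 + lam1) * f' t + lam0 * lam1 * f t"

end

theory Submission
  imports Defs
begin

lemma diff_deriv: "(f::real\<Rightarrow>real) differentiable at x \<Longrightarrow> (f has_real_derivative deriv f x) (at x)"
  by (metis real_differentiable_def DERIV_imp_deriv)

lemma deriv_eqI: "(\<And>x. (u has_real_derivative u1 x) (at x)) \<Longrightarrow> deriv u = u1"
  by (rule ext, rule DERIV_imp_deriv) auto

lemma Lop2: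
  assumes d0: "\<And>x. (u has_real_derivative u1 x) (at x)"
    and d1: "\<And>x. (u1 has_real_derivative u2 x) (at x)"
  shows "Lop [a,b] u t = u2 t - (a+b) * u1 t + a*b*u t"
proof -
  have "deriv u = u1" using d0 by (rule deriv_eqI)
  hence "Dop b u = (\<lambda>t. u1 t - b * u t)" by (simp add: Dop_def)
  moreover have "deriv (\<lambda>t. u1 t - b * u t) = (\<lambda>t. u2 t - b * u1 t)"
    by (rule deriv_eqI) (auto intro!: derivative_eq_intros d0 d1)
  ultimately show ?thesis by (simp add: Lop_def Dop_def algebra_simps)
qed

lemma Lop3:
  assumes d0: "\<And>x. (u has_real_derivative u1 x) (at x)"
    and d1: "\<And>x. (u1 has_real_derivative u2 x) (at x)"
    and d2: "\<And>x. (u2 has_real_derivative u3 x) (at x)"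
  shows "Lop [a,b,0] u t = u3 t - (a+b) * u2 t + a*b*u1 t"
proof -
  have "deriv u = u1" using d0 by (rule deriv_eqI)
  hence "Dop 0 u = u1" by (simp add: Dop_def)
  hence "Lop [a,b,0] u = Lop [a,b] u1" by (simp add: Lop_def)
  thus ?thesis using Lop2[OF d1 d2] by simp
qed

definition chain3 :: "(real\<Rightarrow>real) \<Rightarrow> (real\<Rightarrow>real) \<Rightarrow> (real\<Rightarrow>real) \<Rightarrow> (real\<Rightarrow>real) \<Rightarrow> bool" where
  "chain3 u u1 u2 u3 \<longleftrightarrow> (\<forall>x. (u has_real_derivative u1 x) (at x)) \<and> (\<forall>x. (u1 has_real_derivative u2 x) (at x))
     \<and> (\<forall>x. (u2 has_real_derivative u3 x) (at x)) \<and> continuous_on UNIV u3"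

lemma chain3_Ck3:
  assumes "chain3 u u1 u2 u3" shows "Ck 3 u"
proof -
  have d: "\<And>x. (u has_real_derivative u1 x) (at x)" "\<And>x. (u1 has_real_derivative u2 x) (at x)"
    "\<And>x. (u2 has_real_derivative u3 x) (at x)" and c: "continuous_on UNIV u3"
    using assms by (auto simp: chain3_def)
  have e: "deriv u = u1" "deriv u1 = u2" "deriv u2 = u3" using d by (auto intro: deriv_eqI)
  have p: "(deriv ^^ 0) u = u" "(deriv ^^ 1) u = u1" "(deriv ^^ 2) u = u2" "(deriv ^^ 3) u = u3"
    by (simp_all add: e numeral_3_eq_3 numeral_2_eq_2)
  have "\<forall>j<3. \<forall>x. (deriv ^^ j) u differentiable (at x)"
  proof (intro allI impI)
    fix j x assume "j < (3::nat)"
    hence "j = 0 \<or> j = 1 \<or> j = 2" by auto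
    thus "(deriv ^^ j) u differentiable (at x)" using d
      by (auto simp only: p real_differentiable_def) (blast intro: d)+
  qed
  thus ?thesis using c p by (simp add: Ck_def)
qed

lemma chain3_lin:
  assumes "chain3 u u1 u2 u3" "chain3 v v1 v2 v3"
  shows "chain3 (\<lambda>x. u x + c * v x) (\<lambda>x. u1 x + c * v1 x) (\<lambda>x. u2 x + c * v2 x) (\<lambda>x. u3 x + c * v3 x)"
  using assms unfolding chain3_def
  by (auto intro!: derivative_eq_intros continuous_intros)

lemma mvt_real:
  fixes h :: "real \<Rightarrow> real"
  assumes "a < b" "\<And>x. a \<le> x \<Longrightarrow> x \<le> b \<Longrightarrow> (h has_real_derivative h' x) (at x within {a..b})"
  shows "\<exists>c\<in>{a<..<b}. h b - h a = h' c * (b - a)"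
proof -
  have "\<exists>c\<in>{a<..<b}. h b - h a = (\<lambda>x. h' c * x) (b - a)"
    by (rule mvt_simple[OF assms(1)]) (use assms(2) in \<open>auto simp: has_field_derivative_def mult_commute_abs\<close>)
  thus ?thesis by simp
qed

lemma homog_zero:
  fixes w w1 w2 :: "real \<Rightarrow> real"
  assumes d0: "\<And>x. (w has_real_derivative w1 x) (at x)"
    and d1: "\<And>x. (w1 has_real_derivative w2 x) (at x)"
    and L: "\<And>x. w2 x - (l0+l1)*w1 x + l0*l1*w x = 0"
    and ab: "a < b" and wa: "w a = 0" and wb: "w b = 0"
  shows "w x = 0"
proof -
  define z where "z = (\<lambda>t. w1 t - l1*w t)"
  have dz: "(z has_real_derivative l0 * z x) (at x)" for x
  proof -
    have "(z has_real_derivative w2 x - l1*w1 x) (at x)"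
      unfolding z_def by (auto intro!: derivative_eq_intros d0 d1)
    moreover have "w2 x = (l0+l1)*w1 x - l0*l1*w x" using L[of x] by linarith
    ultimately show ?thesis by (simp add: z_def algebra_simps)
  qed
  define k where "k = (\<lambda>t. z t * exp(-l0*t))"
  have dk: "(k has_real_derivative 0) (at x)" for x
    unfolding k_def by (auto intro!: derivative_eq_intros dz simp: algebra_simps)
  have kc: "k x = k y" for x y using dk DERIV_isconst_all by blast
  define h where "h = (\<lambda>t. w t * exp(-l1*t))"
  have dh: "(h has_real_derivative z x * exp(-l1*x)) (at x)" for x
    unfolding h_def z_def by (auto intro!: derivative_eq_intros d0 simp: algebra_simps)
  obtain c where "h b - h a = z c * exp(-l1*c) * (b - a)"
    using mvt_real[OF ab, of h "\<lambda>x. z x * exp(-l1*x)"] dh has_field_derivative_at_within by blast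
  hence "z c = 0" using ab wa wb by (simp add: h_def)
  hence "k c = 0" by (simp add: k_def)
  hence z0: "z y = 0" for y using kc[of y c] by (simp add: k_def)
  have "(h has_real_derivative 0) (at x)" for x using dh[of x] by (simp add: z0)
  hence "h x = h a" using DERIV_isconst_all by blast
  thus ?thesis by (simp add: h_def wa)
qed

lemma compare:
  fixes w w1 w2 :: "real \<Rightarrow> real"
  assumes ab: "a < b"
    and d0: "\<And>x. x \<in> {a..b} \<Longrightarrow> (w has_real_derivative w1 x) (at x within {a..b})"
    and d1: "\<And>x. x \<in> {a..b} \<Longrightarrow> (w1 has_real_derivative w2 x) (at x within {a..b})"
    and L: "\<And>x. x \<in> {a..b} \<Longrightarrow> w2 x - (l0+l1)*w1 x + l0*l1*w x \<le> 0"
    and wa: "w a \<ge> 0" and wb: "w b \<ge> 0" and x: "x \<in> {a..b}"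
  shows "w x \<ge> 0"
proof (rule ccontr)
  assume "\<not> w x \<ge> 0"
  hence wx: "w x < 0" by simp
  have ax: "a < x" using wx wa x by (cases "x = a") auto
  have xb: "x < b" using wx wb x by (cases "x = b") auto
  define z where "z = (\<lambda>t. w1 t - l1*w t)"
  define h where "h = (\<lambda>t. w t * exp(-l1*t))"
  define k where "k = (\<lambda>t. z t * exp(-l0*t))"
  have dh: "(h has_real_derivative z y * exp(-l1*y)) (at y within {a..b})" if "y \<in> {a..b}" for y
    unfolding h_def z_def using that by (auto intro!: derivative_eq_intros d0 simp: algebra_simps)
  have dk: "(k has_real_derivative (w2 y - (l0+l1)*w1 y + l0*l1*w y) * exp(-l0*y)) (at y within {a..b})"
    if "y \<in> {a..b}" for y
    unfolding k_def z_def using that by (auto intro!: derivative_eq_intros d0 d1 simp: algebra_simps)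
  obtain c1 where c1: "c1 \<in> {a<..<x}" "h x - h a = z c1 * exp(-l1*c1) * (x - a)"
  proof -
    have "(h has_real_derivative z y * exp(-l1*y)) (at y within {a..x})" if "a \<le> y" "y \<le> x" for y
      by (rule DERIV_subset[OF dh]) (use that x in auto)
    thus ?thesis using mvt_real[OF ax, of h "\<lambda>y. z y * exp(-l1*y)"] that by blast
  qed
  obtain c2 where c2: "c2 \<in> {x<..<b}" "h b - h x = z c2 * exp(-l1*c2) * (b - x)"
  proof -
    have "(h has_real_derivative z y * exp(-l1*y)) (at y within {x..b})" if "x \<le> y" "y \<le> b" for y
      by (rule DERIV_subset[OF dh]) (use that x in auto)
    thus ?thesis using mvt_real[OF xb, of h "\<lambda>y. z y * exp(-l1*y)"] that by blast
  qed
  have hx: "h x < 0" using wx by (simp add: h_def mult_neg_pos)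
  have ha: "h a \<ge> 0" "h b \<ge> 0" using wa wb by (simp_all add: h_def)
  have "z c1 * exp(-l1*c1) * (x - a) < 0" using c1 hx ha by linarith
  hence zc1: "z c1 < 0" using ax by (simp add: mult_less_0_iff)
  have "z c2 * exp(-l1*c2) * (b - x) > 0" using c2 hx ha by linarith
  hence zc2: "z c2 > 0" using xb by (simp add: zero_less_mult_iff)
  have c12: "c1 < c2" "a \<le> c1" "c2 \<le> b" using c1 c2 by auto
  obtain c where c: "c \<in> {c1<..<c2}"
    "k c2 - k c1 = (w2 c - (l0+l1)*w1 c + l0*l1*w c) * exp(-l0*c) * (c2 - c1)"
  proof -
    have "(k has_real_derivative (w2 y - (l0+l1)*w1 y + l0*l1*w y) * exp(-l0*y)) (at y within {c1..c2})"
      if "c1 \<le> y" "y \<le> c2" for y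
      by (rule DERIV_subset[OF dk]) (use that c12 in auto)
    thus ?thesis using mvt_real[OF c12(1), of k "\<lambda>y. (w2 y - (l0+l1)*w1 y + l0*l1*w y) * exp(-l0*y)"] that
      by blast
  qed
  have "(w2 c - (l0+l1)*w1 c + l0*l1*w c) \<le> 0" using L c c12 by auto
  hence "k c2 - k c1 \<le> 0" using c c12 by (simp add: mult_nonpos_nonneg)
  moreover have "k c1 < 0" "k c2 > 0" using zc1 zc2 by (simp_all add: k_def mult_neg_pos)
  ultimately show False by linarith
qed

lemma omega_from_chain:
  assumes ch: "chain3 u u1 u2 u3" and L: "\<And>x. u2 x - (l0+l1)*u1 x + l0*l1*u x = -1"
  shows "u \<in> Espace [l0,l1,0] \<and> (\<forall>t. Lop [l0,l1] u t = -1)"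
proof -
  have d: "\<And>x. (u has_real_derivative u1 x) (at x)" "\<And>x. (u1 has_real_derivative u2 x) (at x)"
    "\<And>x. (u2 has_real_derivative u3 x) (at x)"
    using ch by (auto simp: chain3_def)
  have L3: "u3 x - (l0+l1)*u2 x + l0*l1*u1 x = 0" for x
  proof -
    have "((\<lambda>x. u2 x - (l0+l1)*u1 x + l0*l1*u x) has_real_derivative u3 x - (l0+l1)*u2 x + l0*l1*u1 x) (at x)"
      by (auto intro!: derivative_eq_intros d)
    moreover have "(\<lambda>x. u2 x - (l0+l1)*u1 x + l0*l1*u x) = (\<lambda>x. -1)" using L by auto
    ultimately have "((\<lambda>x. -1::real) has_real_derivative u3 x - (l0+l1)*u2 x + l0*l1*u1 x) (at x)" by simp
    thus ?thesis using DERIV_const DERIV_unique by blast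
  qed
  have len: "length [l0,l1,0::real] = 3" by simp
  show ?thesis using Lop3[OF d, of l0 l1] Lop2[OF d(1,2), of l0 l1] L L3 chain3_Ck3[OF ch]
    unfolding Espace_def mem_Collect_eq len by simp
qed

lemma chain3_exp: "chain3 (\<lambda>t. exp(l*t)) (\<lambda>t. l*exp(l*t)) (\<lambda>t. l*(l*exp(l*t))) (\<lambda>t. l*(l*(l*exp(l*t))))"
  unfolding chain3_def by (auto intro!: derivative_eq_intros continuous_intros)

lemma chain3_texp: "chain3 (\<lambda>t. t*exp(l*t)) (\<lambda>t. exp(l*t) + l*t*exp(l*t))
   (\<lambda>t. 2*l*exp(l*t) + l*l*t*exp(l*t)) (\<lambda>t. 3*l*l*exp(l*t) + l*l*l*t*exp(l*t))"
  unfolding chain3_def by (auto intro!: derivative_eq_intros continuous_intros simp: algebra_simps)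

lemma basis_exists:
  "\<exists>y p1 p2 p3 r r1 r2 r3. chain3 y p1 p2 p3 \<and> chain3 r r1 r2 r3
     \<and> (\<forall>x. p2 x - (l0+l1)*p1 x + l0*l1*y x = 0) \<and> (\<forall>x. r2 x - (l0+l1)*r1 x + l0*l1*r x = 0)
     \<and> (\<forall>a b. a < b \<longrightarrow> y a * r b - y b * r a \<noteq> 0)"
proof (cases "l0 = l1")
  case True
  have "\<forall>a b. a < b \<longrightarrow> exp(l0*a) * (b * exp(l0*b)) - exp(l0*b) * (a*exp(l0*a)) \<noteq> 0"
  proof (intro allI impI)
    fix a b :: real assume "a < b"
    have "exp(l0*a) * (b * exp(l0*b)) - exp(l0*b) * (a*exp(l0*a)) = exp(l0*a) * exp(l0*b) * (b - a)"
      by (simp add: algebra_simps)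
    thus "exp(l0*a) * (b * exp(l0*b)) - exp(l0*b) * (a*exp(l0*a)) \<noteq> 0" using \<open>a<b\<close> by simp
  qed
  hence det: "\<forall>a b. a < b \<longrightarrow> exp(l1*a) * (b * exp(l1*b)) - exp(l1*b) * (a*exp(l1*a)) \<noteq> 0"
    using True by simp
  show ?thesis unfolding True
    apply (rule exI[of _ "\<lambda>t. exp(l1*t)"], rule exI[of _ "\<lambda>t. l1*exp(l1*t)"],
           rule exI[of _ "\<lambda>t. l1*(l1*exp(l1*t))"], rule exI[of _ "\<lambda>t. l1*(l1*(l1*exp(l1*t)))"])
    apply (rule exI[of _ "\<lambda>t. t*exp(l1*t)"], rule exI[of _ "\<lambda>t. exp(l1*t) + l1*t*exp(l1*t)"],
           rule exI[of _ "\<lambda>t. 2*l1*exp(l1*t) + l1*l1*t*exp(l1*t)"],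
           rule exI[of _ "\<lambda>t. 3*l1*l1*exp(l1*t) + l1*l1*l1*t*exp(l1*t)"])
    using chain3_exp[of l1] chain3_texp[of l1] det by (auto simp: algebra_simps)
next
  case False
  have "\<forall>a b. a < b \<longrightarrow> exp(l0*a) * exp(l1*b) - exp(l0*b) * exp(l1*a) \<noteq> 0"
  proof (intro allI impI notI)
    fix a b :: real assume ab: "a < b" and e: "exp(l0*a) * exp(l1*b) - exp(l0*b) * exp(l1*a) = 0"
    hence "exp(l0*a + l1*b) = exp(l0*b + l1*a)" by (simp add: exp_add)
    hence "l0*a + l1*b = l0*b + l1*a" by simp
    hence "(l1 - l0) * (b - a) = 0" by (simp add: algebra_simps)
    thus False using ab False by simp
  qed
  note det = this
  show ?thesis
    apply (rule exI[of _ "\<lambda>t. exp(l0*t)"], rule exI[of _ "\<lambda>t. l0*exp(l0*t)"],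
           rule exI[of _ "\<lambda>t. l0*(l0*exp(l0*t))"], rule exI[of _ "\<lambda>t. l0*(l0*(l0*exp(l0*t)))"])
    apply (rule exI[of _ "\<lambda>t. exp(l1*t)"], rule exI[of _ "\<lambda>t. l1*exp(l1*t)"],
           rule exI[of _ "\<lambda>t. l1*(l1*exp(l1*t))"], rule exI[of _ "\<lambda>t. l1*(l1*(l1*exp(l1*t)))"])
    using chain3_exp[of l0] chain3_exp[of l1] det by (auto simp: algebra_simps)
qed

lemma particular_exists:
  "\<exists>q q1 q2 q3. chain3 q q1 q2 q3 \<and> (\<forall>x. q2 x - (l0+l1)*q1 x + l0*l1*q x = -1)"
proof -
  have c0: "chain3 (\<lambda>t. c) (\<lambda>t. 0) (\<lambda>t. 0) (\<lambda>t. 0)" for c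
    unfolding chain3_def by (auto intro!: derivative_eq_intros continuous_intros)
  have c1: "chain3 (\<lambda>t. c*t) (\<lambda>t. c) (\<lambda>t. 0) (\<lambda>t. 0)" for c
    unfolding chain3_def by (auto intro!: derivative_eq_intros continuous_intros)
  have c2: "chain3 (\<lambda>t. -(t*t)/2) (\<lambda>t. -t) (\<lambda>t. -1) (\<lambda>t. 0)"
    unfolding chain3_def by (auto intro!: derivative_eq_intros continuous_intros)
  show ?thesis
  proof (cases "l0*l1 = 0")
    case False
    thus ?thesis using c0[of "-1/(l0*l1)"] by (intro exI conjI) auto
  next
    case p: True
    show ?thesis
    proof (cases "l0+l1 = 0")
      case False
      thus ?thesis using c1[of "1/(l0+l1)"] p by (intro exI conjI) auto
    next
      case True
      thus ?thesis using c2 p by (intro exI conjI) auto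
    qed
  qed
qed

lemma omega_exists:
  assumes ab: "a < b"
  shows "\<exists>u. u \<in> Espace [l0,l1,0] \<and> u a = 0 \<and> u b = 0 \<and> (\<forall>t. Lop [l0,l1] u t = -1)"
proof -
  obtain y p1 p2 p3 r r1 r2 r3 where B: "chain3 y p1 p2 p3" "chain3 r r1 r2 r3"
     "\<And>x. p2 x - (l0+l1)*p1 x + l0*l1*y x = 0" "\<And>x. r2 x - (l0+l1)*r1 x + l0*l1*r x = 0"
     and det: "y a * r b - y b * r a \<noteq> 0"
    using basis_exists[of l0 l1] ab by blast
  obtain q q1 q2 q3 where Q: "chain3 q q1 q2 q3" "\<And>x. q2 x - (l0+l1)*q1 x + l0*l1*q x = -1"
    using particular_exists[of l0 l1] by blast
  define D where "D = y a * r b - y b * r a"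
  define A where "A = (- q a * r b + q b * r a) / D"
  define C where "C = (- y a * q b + y b * q a) / D"
  define u where "u = (\<lambda>x. (q x + A * y x) + C * r x)"
  have ch: "chain3 u (\<lambda>x. (q1 x + A * p1 x) + C * r1 x) (\<lambda>x. (q2 x + A * p2 x) + C * r2 x)
      (\<lambda>x. (q3 x + A * p3 x) + C * r3 x)"
    unfolding u_def by (intro chain3_lin Q B)
  have L: "(q2 x + A * p2 x + C * r2 x) - (l0+l1)*(q1 x + A * p1 x + C * r1 x) + l0*l1*(q x + A * y x + C * r x) = -1" for x
  proof -
    have "(q2 x + A * p2 x + C * r2 x) - (l0+l1)*(q1 x + A * p1 x + C * r1 x) + l0*l1*(q x + A * y x + C * r x)
      = (q2 x - (l0+l1)*q1 x + l0*l1*q x) + A * (p2 x - (l0+l1)*p1 x + l0*l1*y x) + C * (r2 x - (l0+l1)*r1 x + l0*l1*r x)"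
      by (simp add: algebra_simps)
    thus ?thesis using Q(2) B(3,4) by simp
  qed
  have ua: "u a = 0" "u b = 0" using det unfolding u_def A_def C_def D_def
    by (simp_all add: field_simps)
  have "u \<in> Espace [l0, l1, 0] \<and> (\<forall>t. Lop [l0, l1] u t = - 1)"
    by (rule omega_from_chain[OF ch]) (use L in \<open>simp add: u_def\<close>)
  thus ?thesis using ua by blast
qed

lemma Ck_derivs:
  assumes "Ck k u" "2 \<le> k"
  shows "(u has_real_derivative deriv u x) (at x)" "(deriv u has_real_derivative deriv (deriv u) x) (at x)"
proof -
  have h: "\<forall>j<k. \<forall>x. (deriv ^^ j) u differentiable (at x)" using assms(1) by (simp add: Ck_def)
  have "0 < k" "1 < k" using assms(2) by auto
  hence "(deriv ^^ 0) u differentiable (at x)" "(deriv ^^ 1) u differentiable (at x)"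
    using h by blast+
  thus "(u has_real_derivative deriv u x) (at x)" "(deriv u has_real_derivative deriv (deriv u) x) (at x)"
    by (auto intro: diff_deriv)
qed

lemma Espace2_facts:
  assumes "u \<in> Espace [l0,l1]"
  shows "\<And>x. (u has_real_derivative deriv u x) (at x)"
    "\<And>x. (deriv u has_real_derivative deriv (deriv u) x) (at x)"
    "\<And>x. deriv (deriv u) x - (l0+l1) * deriv u x + l0*l1*u x = 0"
proof -
  have c: "Ck 2 u" and L: "\<And>t. Lop [l0,l1] u t = 0" using assms by (auto simp: Espace_def numeral_2_eq_2)
  show d: "\<And>x. (u has_real_derivative deriv u x) (at x)"
    "\<And>x. (deriv u has_real_derivative deriv (deriv u) x) (at x)" using Ck_derivs[OF c] by auto
  show "\<And>x. deriv (deriv u) x - (l0+l1) * deriv u x + l0*l1*u x = 0"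
    using Lop2[OF d, of l0 l1] L by simp
qed

definition OmP :: "real \<Rightarrow> real \<Rightarrow> real \<Rightarrow> real \<Rightarrow> (real \<Rightarrow> real) \<Rightarrow> bool" where
  "OmP a b l0 l1 u \<longleftrightarrow> u \<in> Espace [l0, l1, 0] \<and> u a = 0 \<and> u b = 0 \<and> (\<forall>t. Lop [l0, l1] u t = -1)"

lemma OmP_facts:
  assumes "OmP a b l0 l1 u"
  shows "\<And>x. (u has_real_derivative deriv u x) (at x)"
    "\<And>x. (deriv u has_real_derivative deriv (deriv u) x) (at x)"
    "\<And>x. deriv (deriv u) x - (l0+l1) * deriv u x + l0*l1*u x = -1"
    "u a = 0" "u b = 0"
proof -
  have c: "Ck 3 u" and L: "\<And>t. Lop [l0,l1] u t = -1" using assms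
    by (auto simp: OmP_def Espace_def numeral_3_eq_3)
  show d: "\<And>x. (u has_real_derivative deriv u x) (at x)"
    "\<And>x. (deriv u has_real_derivative deriv (deriv u) x) (at x)" using Ck_derivs[OF c] by auto
  show "\<And>x. deriv (deriv u) x - (l0+l1) * deriv u x + l0*l1*u x = -1"
    using Lop2[OF d, of l0 l1] L by simp
  show "u a = 0" "u b = 0" using assms by (auto simp: OmP_def)
qed

lemma Omega_props:
  assumes ab: "a < b"
  shows "OmP a b l0 l1 (Omega a b l0 l1)"
proof -
  have ex: "\<exists>u. OmP a b l0 l1 u" using omega_exists[OF ab] by (auto simp: OmP_def)
  have un: "u = v" if u: "OmP a b l0 l1 u" and v: "OmP a b l0 l1 v" for u v
  proof
    fix x
    note U = OmP_facts[OF u] and V = OmP_facts[OF v]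
    have "(\<lambda>x. u x - v x) x = 0"
    proof (rule homog_zero[of "\<lambda>x. u x - v x" "\<lambda>x. deriv u x - deriv v x"
          "\<lambda>x. deriv (deriv u) x - deriv (deriv v) x" l0 l1 a b, OF _ _ _ ab])
      show "\<And>x. ((\<lambda>x. u x - v x) has_real_derivative deriv u x - deriv v x) (at x)"
        by (auto intro!: derivative_eq_intros U V)
      show "\<And>x. ((\<lambda>x. deriv u x - deriv v x) has_real_derivative deriv (deriv u) x - deriv (deriv v) x) (at x)"
        by (auto intro!: derivative_eq_intros U V)
      show "deriv (deriv u) y - deriv (deriv v) y - (l0 + l1) * (deriv u y - deriv v y) + l0 * l1 * (u y - v y) = 0" for y
      proof -
        have "deriv (deriv u) y - deriv (deriv v) y - (l0 + l1) * (deriv u y - deriv v y) + l0 * l1 * (u y - v y)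
          = (deriv (deriv u) y - (l0+l1) * deriv u y + l0*l1*u y) - (deriv (deriv v) y - (l0+l1) * deriv v y + l0*l1* v y)"
          by (simp add: algebra_simps)
        thus ?thesis using U(3)[of y] V(3)[of y] by simp
      qed
    qed (use U V in auto)
    thus "u x = v x" by simp
  qed
  have "\<exists>!u. OmP a b l0 l1 u" using ex un by blast
  hence "OmP a b l0 l1 (THE u. OmP a b l0 l1 u)" by (rule theI')
  moreover have "Omega a b l0 l1 = (THE u. OmP a b l0 l1 u)" by (simp add: Omega_def OmP_def)
  ultimately show ?thesis by simp
qed

lemma supnorm_props:
  fixes h :: "real \<Rightarrow> real"
  assumes "a \<le> b" "continuous_on {a..b} h"
  shows "\<And>x. x \<in> {a..b} \<Longrightarrow> \<bar>h x\<bar> \<le> supnorm_on a b h" "supnorm_on a b h \<ge> 0"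
proof -
  have "compact ((\<lambda>t. \<bar>h t\<bar>) ` {a..b})"
    by (rule compact_continuous_image) (auto intro!: continuous_intros assms(2))
  hence bdd: "bdd_above ((\<lambda>t. \<bar>h t\<bar>) ` {a..b})" by (simp add: bounded_imp_bdd_above compact_imp_bounded)
  show le: "\<And>x. x \<in> {a..b} \<Longrightarrow> \<bar>h x\<bar> \<le> supnorm_on a b h"
    unfolding supnorm_on_def by (rule cSup_upper[OF _ bdd]) auto
  show "supnorm_on a b h \<ge> 0" using le[of a] assms(1) by (meson abs_ge_zero atLeastAtMost_iff order_trans order_refl)
qed

lemma local_bound:
  assumes ab: "a < b"
    and fd1: "\<And>x. x \<in> {a..b} \<Longrightarrow> (f has_real_derivative f' x) (at x within {a..b})"
    and fd2: "\<And>x. x \<in> {a..b} \<Longrightarrow> (f' has_real_derivative f'' x) (at x within {a..b})"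
    and fc: "continuous_on {a..b} f''"
    and u: "u \<in> Espace [l0,l1]" and fa: "u a = f a" and fb: "u b = f b"
  shows "\<And>x. x \<in> {a..b} \<Longrightarrow> \<bar>f x - u x\<bar> \<le> Mconst a b l0 l1 * supnorm_on a b (L2 l0 l1 f f' f'')"
    "Mconst a b l0 l1 \<ge> 0" "supnorm_on a b (L2 l0 l1 f f' f'') \<ge> 0"
proof -
  define Om where "Om = Omega a b l0 l1"
  note O = OmP_facts[OF Omega_props[OF ab, of l0 l1, folded Om_def]]
  note U = Espace2_facts[OF u]
  have cf: "continuous_on {a..b} f" unfolding continuous_on_eq_continuous_within
    using fd1 DERIV_continuous by blast
  have cf': "continuous_on {a..b} f'" unfolding continuous_on_eq_continuous_within
    using fd2 DERIV_continuous by blast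
  have cL: "continuous_on {a..b} (L2 l0 l1 f f' f'')"
    unfolding L2_def by (intro continuous_intros cf cf' fc)
  have cO: "continuous_on {a..b} Om"
    by (rule continuous_at_imp_continuous_on) (auto intro: DERIV_isCont O(1))
  define K where "K = supnorm_on a b (L2 l0 l1 f f' f'')"
  have KL: "\<And>x. x \<in> {a..b} \<Longrightarrow> \<bar>L2 l0 l1 f f' f'' x\<bar> \<le> K" and K0: "K \<ge> 0"
    using supnorm_props[OF _ cL] ab unfolding K_def by auto
  have MO: "\<And>x. x \<in> {a..b} \<Longrightarrow> \<bar>Om x\<bar> \<le> Mconst a b l0 l1" and M0: "Mconst a b l0 l1 \<ge> 0"
    using supnorm_props[OF _ cO] ab unfolding Mconst_def Om_def by auto
  show "Mconst a b l0 l1 \<ge> 0" "supnorm_on a b (L2 l0 l1 f f' f'') \<ge> 0" using M0 K0 K_def by auto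
  have main: "c * (f x - u x) \<le> K * Om x" if x: "x \<in> {a..b}" and c: "c = 1 \<or> c = -1" for x c
  proof -
    have "0 \<le> K * Om x - c * (f x - u x)"
    proof (rule compare[of a b "\<lambda>y. K * Om y - c * (f y - u y)"
          "\<lambda>y. K * deriv Om y - c * (f' y - deriv u y)"
          "\<lambda>y. K * deriv (deriv Om) y - c * (f'' y - deriv (deriv u) y)" l0 l1, OF ab _ _ _ _ _ x])
      show "((\<lambda>y. K * Om y - c * (f y - u y)) has_real_derivative K * deriv Om y - c * (f' y - deriv u y))
          (at y within {a..b})" if "y \<in> {a..b}" for y
        by (auto intro!: derivative_eq_intros fd1 that has_field_derivative_at_within[OF O(1)]
            has_field_derivative_at_within[OF U(1)])
      show "((\<lambda>y. K * deriv Om y - c * (f' y - deriv u y)) has_real_derivative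
          K * deriv (deriv Om) y - c * (f'' y - deriv (deriv u) y)) (at y within {a..b})" if "y \<in> {a..b}" for y
        by (auto intro!: derivative_eq_intros fd2 that has_field_derivative_at_within[OF O(2)]
            has_field_derivative_at_within[OF U(2)])
      show "K * deriv (deriv Om) y - c * (f'' y - deriv (deriv u) y) - (l0 + l1) * (K * deriv Om y - c * (f' y - deriv u y))
          + l0 * l1 * (K * Om y - c * (f y - u y)) \<le> 0" if "y \<in> {a..b}" for y
      proof -
        have "K * deriv (deriv Om) y - c * (f'' y - deriv (deriv u) y) - (l0 + l1) * (K * deriv Om y - c * (f' y - deriv u y))
          + l0 * l1 * (K * Om y - c * (f y - u y)) =
          K * (deriv (deriv Om) y - (l0+l1) * deriv Om y + l0*l1*Om y) - c * L2 l0 l1 f f' f'' y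
          + c * (deriv (deriv u) y - (l0+l1) * deriv u y + l0*l1*u y)"
          by (simp add: L2_def algebra_simps)
        also have "\<dots> = - K - c * L2 l0 l1 f f' f'' y" using O(3)[of y] U(3)[of y] by simp
        also have "\<dots> \<le> 0" using KL[OF that] c by auto
        finally show ?thesis .
      qed
    qed (use O(4,5) fa fb in auto)
    thus ?thesis by simp
  qed
  fix x assume x: "x \<in> {a..b}"
  have "\<bar>f x - u x\<bar> \<le> K * Om x" using main[OF x, of 1] main[OF x, of "-1"] by auto
  also have "\<dots> \<le> K * Mconst a b l0 l1" using MO[OF x] K0 by (intro mult_left_mono) auto
  finally show "\<bar>f x - u x\<bar> \<le> Mconst a b l0 l1 * supnorm_on a b (L2 l0 l1 f f' f'')"
    by (simp add: K_def mult.commute)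
qed

theorem mainTheorem8:
  fixes n :: nat and t :: "nat \<Rightarrow> real" and lam0 lam1 :: "nat \<Rightarrow> real"
    and f f' f'' g :: "real \<Rightarrow> real"
  assumes n2: "n \<ge> 2"
    and t_mono: "\<And>j. 1 \<le> j \<Longrightarrow> j < n \<Longrightarrow> t j < t (Suc j)"
    and lam_le: "\<And>j. 1 \<le> j \<Longrightarrow> j < n \<Longrightarrow> lam0 j \<le> lam1 j"
    and f_d1: "\<And>x. x \<in> {t 1..t n} \<Longrightarrow> (f has_real_derivative f' x) (at x within {t 1..t n})"
    and f_d2: "\<And>x. x \<in> {t 1..t n} \<Longrightarrow> (f' has_real_derivative f'' x) (at x within {t 1..t n})"
    and f_C2: "continuous_on {t 1..t n} f''"
    and g_cont: "continuous_on {t 1..t n} g"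
    and g_piece: "\<And>j. 1 \<le> j \<Longrightarrow> j < n \<Longrightarrow>
                   \<exists>u \<in> Espace [lam0 j, lam1 j]. \<forall>x \<in> {t j..t (Suc j)}. g x = u x"
    and g_interp: "\<And>j. 1 \<le> j \<Longrightarrow> j \<le> n \<Longrightarrow> g (t j) = f (t j)"
  shows "supnorm_on (t 1) (t n) (\<lambda>x. f x - g x)
     \<le> Max ((\<lambda>j. Mconst (t j) (t (Suc j)) (lam0 j) (lam1 j)) ` {1..n-1})
       * Max ((\<lambda>j. supnorm_on (t j) (t (Suc j)) (L2 (lam0 j) (lam1 j) f f' f'')) ` {1..n-1})"
proof -
  define MM where "MM = Max ((\<lambda>j. Mconst (t j) (t (Suc j)) (lam0 j) (lam1 j)) ` {1..n-1})"
  define KK where "KK = Max ((\<lambda>j. supnorm_on (t j) (t (Suc j)) (L2 (lam0 j) (lam1 j) f f' f'')) ` {1..n-1})"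
  have tmon: "t i \<le> t (i + k)" if "1 \<le> i" "i + k \<le> n" for i k
    using that
  proof (induction k)
    case (Suc k)
    hence "t i \<le> t (i + k)" by simp
    also have "\<dots> < t (Suc (i + k))" using Suc.prems by (intro t_mono) auto
    finally show ?case by simp
  qed simp
  have cover: "\<exists>j. 1 \<le> j \<and> j < k + 2 \<and> x \<in> {t j..t (Suc j)}"
    if "k + 2 \<le> n" "t 1 \<le> x" "x \<le> t (k + 2)" for k x
    using that
  proof (induction k)
    case 0
    thus ?case by (intro exI[of _ 1]) (auto simp: numeral_2_eq_2)
  next
    case (Suc k)
    show ?case
    proof (cases "x \<le> t (k + 2)")
      case True
      with Suc obtain j where "1 \<le> j \<and> j < k + 2 \<and> x \<in> {t j..t (Suc j)}" by fastforce
      thus ?thesis by (intro exI[of _ j]) auto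
    next
      case False
      thus ?thesis using Suc.prems by (intro exI[of _ "k+2"]) auto
    qed
  qed
  have bound: "\<bar>f x - g x\<bar> \<le> MM * KK" if x: "x \<in> {t 1..t n}" for x
  proof -
    obtain k where k: "n = k + 2" using n2 by (metis add.commute le_Suc_ex)
    have "n - 2 + 2 = n" using n2 by simp
    then obtain j where j: "1 \<le> j" "j < n" "x \<in> {t j..t (Suc j)}" using cover[of "n-2" x] x
      by (metis atLeastAtMost_iff order_refl)
    have ab: "t j < t (Suc j)" using t_mono j by auto
    have sub: "{t j..t (Suc j)} \<subseteq> {t 1..t n}"
      using tmon[of 1 "j - 1"] tmon[of "Suc j" "n - Suc j"] j by auto
    obtain u where u: "u \<in> Espace [lam0 j, lam1 j]" "\<forall>y \<in> {t j..t (Suc j)}. g y = u y"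
      using g_piece[OF j(1,2)] by blast
    have ua: "u (t j) = f (t j)" "u (t (Suc j)) = f (t (Suc j))"
      using u(2) g_interp[of j] g_interp[of "Suc j"] j ab by auto
    have fd1: "(f has_real_derivative f' y) (at y within {t j..t (Suc j)})" if "y \<in> {t j..t (Suc j)}" for y
      using DERIV_subset[OF f_d1 sub] that sub by auto
    have fd2: "(f' has_real_derivative f'' y) (at y within {t j..t (Suc j)})" if "y \<in> {t j..t (Suc j)}" for y
      using DERIV_subset[OF f_d2 sub] that sub by auto
    have cs: "continuous_on {t j..t (Suc j)} f''" using continuous_on_subset[OF f_C2 sub] .
    have LB: "\<bar>f x - u x\<bar> \<le> Mconst (t j) (t (Suc j)) (lam0 j) (lam1 j) * supnorm_on (t j) (t (Suc j)) (L2 (lam0 j) (lam1 j) f f' f'')"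
      "Mconst (t j) (t (Suc j)) (lam0 j) (lam1 j) \<ge> 0"
      "supnorm_on (t j) (t (Suc j)) (L2 (lam0 j) (lam1 j) f f' f'') \<ge> 0"
      using local_bound[of "t j" "t (Suc j)" f f' f'' u "lam0 j" "lam1 j"] ab fd1 fd2 cs u(1) ua j(3) by blast+
    have jin: "j \<in> {1..n-1}" using j by auto
    have "Mconst (t j) (t (Suc j)) (lam0 j) (lam1 j) \<le> MM" unfolding MM_def
      by (rule Max_ge) (use jin in auto)
    moreover have "supnorm_on (t j) (t (Suc j)) (L2 (lam0 j) (lam1 j) f f' f'') \<le> KK" unfolding KK_def
      by (rule Max_ge) (use jin in auto)
    ultimately have "Mconst (t j) (t (Suc j)) (lam0 j) (lam1 j) * supnorm_on (t j) (t (Suc j)) (L2 (lam0 j) (lam1 j) f f' f'')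
        \<le> MM * KK"
      using LB(2,3) by (intro mult_mono) auto
    moreover have "\<bar>f x - g x\<bar> = \<bar>f x - u x\<bar>" using u(2) j by auto
    ultimately show ?thesis using LB(1) by linarith
  qed
  have tn: "t 1 \<le> t n" using tmon[of 1 "n - 1"] n2 by auto
  have "supnorm_on (t 1) (t n) (\<lambda>x. f x - g x) \<le> MM * KK"
    unfolding supnorm_on_def by (rule cSup_least) (use tn bound in auto)
  thus ?thesis by (simp add: MM_def KK_def)
qed

end
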